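(* Let $L(\lambda)\in\mathbb{C}[\lambda]^{m\times n}$ be a matrix pencil. Then $L(\lambda)$ is right invertible over $\mathbb{C}[\lambda]$ if and only if it has no finite eigenvalues and no left minimal indices. Moreover, in that case, there exists a polynomial right inverse of $L(\lambda)$ having degree at most $m-1$.
   Context: A matrix pencil is a polynomial matrix of degree at most $1$. $A(\lambda)\in\mathbb{C}[\lambda]^{m\times n}$ is right invertible over $\mathbb{C}[\lambda]$ if there is a polynomial matrix $A(\lambda)^R\in\mathbb{C}[\lambda]^{n\times m}$ with $A(\lambda)A(\lambda)^R=I_m$; by convention, if $m=0$ the empty $0\times n$ matrix is right invertible with right inverse its $n\times 0$ transpose. The normal rank of $L(\lambda)$ is its rank over the field $\mathbb{C}(\lambda)$; $\lambda_0\in\mathbb{C}$ is a finite eigenvalue if $\operatorname{rank}_{\mathbb{C}}L(\lambda_0)$ is less than the normal rank. The left null space is $\{y(\lambda)\in\mathbb{C}(\lambda)^m: y(\lambda)^*L(\lambda)=0\}$; the left minimal indices are the column degrees of a minimal polynomial basis of it (a polynomial basis with minimal sum of column degrees), so $L$ has no left minimal indices iff its left null space is $\{0\}$. *)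

theory Defs
  imports "Jordan_Normal_Form.DL_Rank" "HOL-Computational_Algebra.Fraction_Field"
begin

definition is_pencil :: "complex poly mat \<Rightarrow> bool" where
  "is_pencil L \<longleftrightarrow> (\<forall>i < dim_row L. \<forall>j < dim_col L. degree (L $$ (i,j)) \<le> 1)"

definition eval_pmat :: "complex poly mat \<Rightarrow> complex \<Rightarrow> complex mat" where
  "eval_pmat L x = map_mat (\<lambda>p. poly p x) L"

definition frac_mat :: "complex poly mat \<Rightarrow> complex poly fract mat" where
  "frac_mat L = map_mat (\<lambda>p. Fract p 1) L"

definition normal_rank :: "complex poly mat \<Rightarrow> nat" where
  "normal_rank L = vec_space.rank (dim_row L) (frac_mat L)"

definition finite_eigenvalue :: "complex poly mat \<Rightarrow> complex \<Rightarrow> bool" where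
  "finite_eigenvalue L x \<longleftrightarrow> vec_space.rank (dim_row L) (eval_pmat L x) < normal_rank L"

definition left_null_space :: "complex poly mat \<Rightarrow> complex poly fract vec set" where
  "left_null_space L = {y \<in> carrier_vec (dim_row L). transpose_mat (frac_mat L) *\<^sub>v y = 0\<^sub>v (dim_col L)}"

text \<open>As stated in the context: L has no left minimal indices iff its left null space is trivial.\<close>
definition no_left_minimal_indices :: "complex poly mat \<Rightarrow> bool" where
  "no_left_minimal_indices L \<longleftrightarrow> left_null_space L = {0\<^sub>v (dim_row L)}"

definition is_right_inverse :: "complex poly mat \<Rightarrow> complex poly mat \<Rightarrow> bool" where
  "is_right_inverse L R \<longleftrightarrow> R \<in> carrier_mat (dim_col L) (dim_row L) \<and> L * R = 1\<^sub>m (dim_row L)"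

definition right_invertible :: "complex poly mat \<Rightarrow> bool" where
  "right_invertible L \<longleftrightarrow> (\<exists>R. is_right_inverse L R)"

text \<open>Degree of a polynomial matrix bounded by d (d an integer, so that d = -1 is allowed
  for the empty case m = 0).\<close>
definition pmat_degree_le :: "complex poly mat \<Rightarrow> int \<Rightarrow> bool" where
  "pmat_degree_le R d \<longleftrightarrow> (\<forall>i < dim_row R. \<forall>j < dim_col R. int (degree (R $$ (i,j))) \<le> d)"

end

theory Submission imports Defs "Jordan_Normal_Form.Char_Poly" "HOL-Computational_Algebra.Fundamental_Theorem_Algebra" begin


lemma (in vec_space) rank_max_indep:
  assumes A: "A \<in> carrier_mat n nc"
  obtains S where "S \<subseteq> set (cols A)" "lin_indpt S" "card S = rank A" "set (cols A) \<subseteq> span S"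
proof -
  obtain S where max: "maximal S (\<lambda>T. T \<subseteq> set (cols A) \<and> lin_indpt T)"
    using maximal_exists[of "(\<lambda>T. T \<subseteq> set (cols A) \<and> lin_indpt T)" "card (set (cols A))" "{}"]
    by (meson List.finite_set card_mono empty_iff empty_subsetI finite_lin_indpt2 rev_finite_subset)
  have S: "S \<subseteq> set (cols A)" "lin_indpt S" using max unfolding maximal_def by auto
  have colsC: "set (cols A) \<subseteq> carrier_vec n" using A cols_dim by blast
  have SC: "S \<subseteq> carrier_vec n" using S colsC by auto
  have "card S = rank A" using rank_card_indpt[OF A max] by simp
  moreover have "set (cols A) \<subseteq> span S"
  proof
    fix c assume c: "c \<in> set (cols A)"
    show "c \<in> span S"
    proof (rule ccontr)
      assume nc: "c \<notin> span S"
      have "c \<notin> S" using nc in_own_span[of S] SC by auto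
      then have "lin_indpt (S \<union> {c})" using lin_dep_iff_in_span[of S c] SC S(2) nc c colsC by auto
      moreover have "S \<union> {c} \<subseteq> set (cols A)" using S c by auto
      ultimately have "S = S \<union> {c}" using max unfolding maximal_def by blast
      then show False using \<open>c \<notin> S\<close> by auto
    qed
  qed
  ultimately show ?thesis using that S by blast
qed

lemma (in vec_space) span_orth:
  assumes SC: "S \<subseteq> carrier_vec n" and y: "y \<in> carrier_vec n" and orth: "\<forall>s\<in>S. y \<bullet> s = 0"
    and v: "v \<in> span S"
  shows "y \<bullet> v = 0"
proof -
  from v obtain a T where T: "finite T" "T \<subseteq> S" "v = lincomb a T" unfolding span_def by auto
  have TC: "T \<subseteq> carrier_vec n" using T SC by auto
  have vi: "\<And>i. i < n \<Longrightarrow> v $ i = (\<Sum>t\<in>T. a t * t $ i)" using lincomb_index[OF _ TC] T by auto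
  have vC: "v \<in> carrier_vec n" using T TC lincomb_closed by auto
  have "y \<bullet> v = (\<Sum>i<n. y $ i * (\<Sum>t\<in>T. a t * t $ i))"
    unfolding scalar_prod_def using vC vi by (auto simp: atLeast0LessThan intro!: sum.cong)
  also have "\<dots> = (\<Sum>t\<in>T. a t * (\<Sum>i<n. y $ i * t $ i))"
    by (simp add: sum_distrib_left sum.swap[of _ T] algebra_simps)
  also have "\<dots> = (\<Sum>t\<in>T. a t * (y \<bullet> t))"
    using TC unfolding scalar_prod_def by (intro sum.cong) (auto simp: atLeast0LessThan)
  also have "\<dots> = 0" using orth T by (intro sum.neutral) auto
  finally show ?thesis .
qed

lemma (in vec_space) rank_le: assumes A: "A \<in> carrier_mat n nc" shows "rank A \<le> n"
proof -
  obtain S where S: "S \<subseteq> set (cols A)" "lin_indpt S" "card S = rank A"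
    by (rule rank_max_indep[OF A])
  have SC: "S \<subseteq> carrier_vec n" using S(1) A cols_dim by blast
  have "card S \<le> dim" by (rule li_le_dim(2)[OF fin_dim _ S(2)]) (use SC in simp)
  then show ?thesis unfolding dim_is_n S(3) .
qed

lemma col_scalar_transpose:
  fixes A :: "'a :: comm_semiring_0 mat"
  assumes A: "A \<in> carrier_mat n nc" and y: "y \<in> carrier_vec n" and j: "j < nc"
  shows "(transpose_mat A *\<^sub>v y) $ j = y \<bullet> col A j"
  using A y j by (simp add: comm_scalar_prod[of y n])

lemma (in vec_space) rank_full_imp:
  assumes A: "A \<in> carrier_mat n nc" and r: "rank A = n" and y: "y \<in> carrier_vec n"
    and ker: "transpose_mat A *\<^sub>v y = 0\<^sub>v nc"
  shows "y = 0\<^sub>v n"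
proof -
  obtain S where S: "S \<subseteq> set (cols A)" "lin_indpt S" "card S = rank A"
    by (rule rank_max_indep[OF A])
  have SC: "S \<subseteq> carrier_vec n" using S(1) A cols_dim by blast
  have fS: "finite S" using li_le_dim(1)[OF fin_dim _ S(2)] SC by auto
  have "basis S" using dim_li_is_basis[OF fin_dim fS _ S(2)] SC S r dim_is_n by auto
  then have spanS: "span S = carrier_vec n" unfolding basis_def by auto
  have orth: "\<forall>s\<in>S. y \<bullet> s = 0"
  proof
    fix s assume "s \<in> S"
    then obtain j where j: "j < nc" "s = col A j" using S A by (auto simp: cols_def)
    have "y \<bullet> s = (transpose_mat A *\<^sub>v y) $ j" using col_scalar_transpose[OF A y j(1)] j by simp
    then show "y \<bullet> s = 0" using ker j by simp
  qed
  show ?thesis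
  proof (rule eq_vecI)
    fix i assume "i < dim_vec (0\<^sub>v n :: 'a vec)"
    then have i: "i < n" by simp
    have "y \<bullet> unit_vec n i = 0" using span_orth[OF SC y orth] spanS by auto
    then show "y $ i = 0\<^sub>v n $ i" using i y by (simp add: scalar_prod_right_unit)
  qed (use y in auto)
qed

lemma (in vec_space) rank_full_if:
  assumes A: "A \<in> carrier_mat n nc"
    and triv: "\<And>y. y \<in> carrier_vec n \<Longrightarrow> transpose_mat A *\<^sub>v y = 0\<^sub>v nc \<Longrightarrow> y = 0\<^sub>v n"
  shows "rank A = n"
proof (rule ccontr)
  assume ne: "rank A \<noteq> n"
  obtain S where S: "S \<subseteq> set (cols A)" "lin_indpt S" "card S = rank A" "set (cols A) \<subseteq> span S"
    by (rule rank_max_indep[OF A])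
  have lt: "card S < n" using rank_le[OF A] ne S by auto
  have SC: "S \<subseteq> carrier_vec n" using S(1) A cols_dim by blast
  have fS: "finite S" using li_le_dim(1)[OF fin_dim _ S(2)] SC by auto
  obtain ss where ss: "set ss = S" "distinct ss" using finite_distinct_list[OF fS] by blast
  have lss: "length ss = card S" using ss distinct_card by fastforce
  define c where "c = (\<lambda>i. if i < length ss then ss ! i else 0\<^sub>v n)"
  define N where "N = mat\<^sub>r n n (\<lambda>i. if i = n - 1 then 0\<^sub>v n else c i)"
  have cC: "c \<in> {0..<n} \<rightarrow> carrier_vec n" using SC ss unfolding c_def by (auto dest!: nth_mem[of _ ss])
  have "det N = 0" unfolding N_def using det_row_0[OF _ cC] lt by auto
  moreover have NC: "N \<in> carrier_mat n n" unfolding N_def by auto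
  ultimately obtain y where y: "y \<in> carrier_vec n" "y \<noteq> 0\<^sub>v n" "N *\<^sub>v y = 0\<^sub>v n"
    using det_0_iff_vec_prod_zero_field[OF NC] by blast
  have orth: "\<forall>s\<in>S. y \<bullet> s = 0"
  proof
    fix s assume "s \<in> S"
    then obtain i where i: "i < length ss" "s = ss ! i" using ss by (auto simp: in_set_conv_nth)
    have iN: "i < n" "i \<noteq> n - 1" using i lss lt by auto
    have "s \<in> carrier_vec n" using SC \<open>s \<in> S\<close> by auto
    then have "row N i = s" unfolding N_def c_def using iN i by (subst row_mat_of_row_fun) auto
    then have "s \<bullet> y = 0" using arg_cong[OF y(3), of "\<lambda>v. v $ i"] iN NC by auto
    then show "y \<bullet> s = 0" using comm_scalar_prod[of y n s] y SC \<open>s \<in> S\<close> by auto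
  qed
  have "transpose_mat A *\<^sub>v y = 0\<^sub>v nc"
  proof (rule eq_vecI)
    fix j assume "j < dim_vec (0\<^sub>v nc :: 'a vec)"
    then have j: "j < nc" by simp
    have "col A j \<in> set (cols A)" using A j by (auto simp: cols_def)
    then have "y \<bullet> col A j = 0" using span_orth[OF SC y(1) orth] S(4) by auto
    then show "(transpose_mat A *\<^sub>v y) $ j = 0\<^sub>v nc $ j" using col_scalar_transpose[OF A y(1) j] j by simp
  qed (use A in auto)
  then show False using triv y by auto
qed


lemma fredholm:
  fixes M :: "'a::field mat"
  assumes M: "M \<in> carrier_mat p q" and Bm: "Bm \<in> carrier_mat p r"
    and cond: "\<And>y. y \<in> carrier_vec p \<Longrightarrow> transpose_mat M *\<^sub>v y = 0\<^sub>v q \<Longrightarrow> transpose_mat Bm *\<^sub>v y = 0\<^sub>v r"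
  shows "\<exists>X \<in> carrier_mat q r. M * X = Bm"
proof -
  obtain E D where gj: "gauss_jordan M Bm = (E, D)" by (cases "gauss_jordan M Bm") auto
  from gauss_jordan_transform[OF M Bm gj, unfolded ring_mat_def Units_def, simplified]
  obtain P where P: "P \<in> carrier_mat p p" and EPM: "E = P * M" and DPB: "D = P * Bm" by auto
  have EC: "E \<in> carrier_mat p q" and DC: "D \<in> carrier_mat p r" using gauss_jordan[OF M Bm gj] by auto
  have eqv: "\<And>X. X \<in> carrier_mat q r \<Longrightarrow> (M * X = Bm) = (E * X = D)" using gauss_jordan[OF M Bm gj] by auto
  from gauss_jordan_row_echelon[OF M gj] obtain f where pf: "pivot_fun E f q"
    unfolding row_echelon_form_def using EC by auto
  have dE: "dim_row E = p" using EC by auto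
  note pD = pivot_funD[OF dE pf]
  have zero_row: "D $$ (i, c) = 0" if i: "i < p" and fi: "f i = q" and c: "c < r" for i c
  proof -
    define y where "y = transpose_mat P *\<^sub>v unit_vec p i"
    have yC: "y \<in> carrier_vec p" unfolding y_def using P by auto
    have rowE: "row E i = 0\<^sub>v q" using pivot_fun_zero_row_iff[OF pf EC i] fi by auto
    have "transpose_mat M *\<^sub>v y = transpose_mat E *\<^sub>v unit_vec p i"
      unfolding y_def EPM using P M
      by (simp add: transpose_mult assoc_mult_mat_vec[of _ q p _ p])
    also have "\<dots> = 0\<^sub>v q"
    proof (rule eq_vecI)
      fix j assume "j < dim_vec (0\<^sub>v q :: 'a vec)"
      then have j: "j < q" by simp
      have "(transpose_mat E *\<^sub>v unit_vec p i) $ j = E $$ (i, j)" using EC i j by simp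
      also have "\<dots> = row E i $ j" using EC i j by simp
      finally show "(transpose_mat E *\<^sub>v unit_vec p i) $ j = 0\<^sub>v q $ j" using rowE j by simp
    qed (use EC in auto)
    finally have "transpose_mat Bm *\<^sub>v y = 0\<^sub>v r" using cond[OF yC] by simp
    moreover have "transpose_mat Bm *\<^sub>v y = transpose_mat D *\<^sub>v unit_vec p i"
      unfolding y_def DPB using P Bm
      by (simp add: transpose_mult assoc_mult_mat_vec[of _ r p _ p])
    ultimately have "(transpose_mat D *\<^sub>v unit_vec p i) $ c = 0" using c by simp
    moreover have "(transpose_mat D *\<^sub>v unit_vec p i) $ c = D $$ (i, c)" using DC i c by simp
    ultimately show ?thesis by simp
  qed
  have inj: "i = i'" if "i < p" "i' < p" "f i = f i'" "f i < q" for i i'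
  proof (rule ccontr)
    assume "i \<noteq> i'"
    then have "E $$ (i', f i) = 0" using pD(5)[of i i'] that by auto
    moreover have "E $$ (i', f i') = 1" using pD(4)[of i'] that by auto
    ultimately show False using that by simp
  qed
  define X where "X = mat q r (\<lambda>(j,c). if \<exists>i<p. f i = j then D $$ (THE i. i < p \<and> f i = j, c) else 0)"
  have XC: "X \<in> carrier_mat q r" unfolding X_def by auto
  have key: "E $$ (i, j) * X $$ (j, c) = (if j = f i then D $$ (i, c) else 0)"
    if i: "i < p" and j: "j < q" and c: "c < r" for i j c
  proof (cases "\<exists>i'<p. f i' = j")
    case True
    then obtain i' where i': "i' < p" "f i' = j" by auto
    have the: "(THE i. i < p \<and> f i = j) = i'"
      using i' inj j by (intro the_equality) auto
    have X: "X $$ (j, c) = D $$ (i', c)" unfolding X_def using j c True the by simp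
    show ?thesis
    proof (cases "i' = i")
      case True
      then show ?thesis using X i' pD(4)[OF i] j by auto
    next
      case False
      have "E $$ (i, f i') = 0" using pD(5)[of i' i] False i i' j by auto
      moreover have "j \<noteq> f i" using inj[of i i'] False i i' j by auto
      ultimately show ?thesis using X i' by auto
    qed
  next
    case False
    then have "X $$ (j, c) = 0" unfolding X_def using j c by auto
    moreover have "j \<noteq> f i" using False i by auto
    ultimately show ?thesis by simp
  qed
  have "E * X = D"
  proof (rule eq_matI)
    fix i c assume i: "i < dim_row D" and c: "c < dim_col D"
    then have i': "i < p" and c': "c < r" using DC by auto
    have "(E * X) $$ (i, c) = (\<Sum>j<q. E $$ (i, j) * X $$ (j, c))"
      using EC XC i' c' by (simp add: scalar_prod_def atLeast0LessThan)
    also have "\<dots> = (\<Sum>j<q. if j = f i then D $$ (i, c) else 0)"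
      using key[OF i' _ c'] by (intro sum.cong) auto
    also have "\<dots> = D $$ (i, c)"
    proof (cases "f i < q")
      case True
      then show ?thesis by simp
    next
      case False
      then have "f i = q" using pD(1)[OF i'] by auto
      then show ?thesis using zero_row[OF i' _ c'] by simp
    qed
    finally show "(E * X) $$ (i, c) = D $$ (i, c)" .
  qed (use EC XC DC in auto)
  then show ?thesis using eqv[OF XC] XC by auto
qed



lemma sum_swap_lin:
  fixes a :: "'k \<Rightarrow> 'a::comm_semiring_0"
  shows "(\<Sum>i\<in>I. (\<Sum>k\<in>K. a k * b k i) * e i) = (\<Sum>k\<in>K. a k * (\<Sum>i\<in>I. b k i * e i))"
  unfolding sum_distrib_right sum_distrib_left by (subst sum.swap) (simp add: mult.assoc)

lemma dep_exists:
  fixes ys :: "nat \<Rightarrow> nat \<Rightarrow> 'a::field"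
  shows "\<exists>c. (\<exists>k\<le>m. c k \<noteq> 0) \<and> (\<forall>i<m. (\<Sum>k\<le>m. c k * ys k i) = 0)"
proof -
  define cv where "cv = (\<lambda>i. vec (Suc m) (\<lambda>k. ys k i))"
  define N where "N = mat\<^sub>r (Suc m) (Suc m) (\<lambda>i. if i = m then 0\<^sub>v (Suc m) else cv i)"
  have cC: "cv \<in> {0..<Suc m} \<rightarrow> carrier_vec (Suc m)" unfolding cv_def by auto
  have "det N = 0" unfolding N_def using det_row_0[OF _ cC, of m] by auto
  moreover have NC: "N \<in> carrier_mat (Suc m) (Suc m)" unfolding N_def by auto
  ultimately obtain v where v: "v \<in> carrier_vec (Suc m)" "v \<noteq> 0\<^sub>v (Suc m)" "N *\<^sub>v v = 0\<^sub>v (Suc m)"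
    using det_0_iff_vec_prod_zero_field[OF NC] by blast
  have "\<exists>k\<le>m. v $ k \<noteq> 0"
  proof (rule ccontr)
    assume "\<not> ?thesis"
    then have "v = 0\<^sub>v (Suc m)" using v(1) by (intro eq_vecI) auto
    then show False using v(2) by simp
  qed
  moreover have "(\<Sum>k\<le>m. v $ k * ys k i) = 0" if i: "i < m" for i
  proof -
    have "(N *\<^sub>v v) $ i = 0" using v(3) i by simp
    moreover have "(N *\<^sub>v v) $ i = cv i \<bullet> v" using i NC unfolding N_def by (simp add: cv_def)
    moreover have "cv i \<bullet> v = (\<Sum>k\<le>m. v $ k * ys k i)"
      unfolding cv_def scalar_prod_def using v(1)
      by (auto simp: atLeast0LessThan lessThan_Suc_atMost mult.commute intro!: sum.cong)
    ultimately show ?thesis by simp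
  qed
  ultimately show ?thesis by (intro exI[of _ "\<lambda>k. v $ k"]) auto
qed

lemma eig_exists:
  fixes C :: "nat \<Rightarrow> nat \<Rightarrow> complex"
  assumes j: "0 < j"
  shows "\<exists>\<mu> v. (\<exists>k<j. v k \<noteq> 0) \<and> (\<forall>l<j. (\<Sum>k<j. v k * C k l) = \<mu> * v l)"
proof -
  define Cm where "Cm = mat j j (\<lambda>(l,k). C k l)"
  have CmC: "Cm \<in> carrier_mat j j" unfolding Cm_def by auto
  have "degree (char_poly Cm) = j" using degree_monic_char_poly[OF CmC] by auto
  then obtain \<mu> where "poly (char_poly Cm) \<mu> = 0" using alg_closed_imp_poly_has_root[of "char_poly Cm"] j by auto
  then have "eigenvalue Cm \<mu>" using eigenvalue_root_char_poly[OF CmC] by auto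
  then obtain v where v: "v \<in> carrier_vec j" "v \<noteq> 0\<^sub>v j" "Cm *\<^sub>v v = \<mu> \<cdot>\<^sub>v v"
    unfolding eigenvalue_def eigenvector_def using CmC by auto
  have "\<exists>k<j. v $ k \<noteq> 0"
  proof (rule ccontr)
    assume "\<not> ?thesis"
    then have "v = 0\<^sub>v j" using v(1) by (intro eq_vecI) auto
    then show False using v(2) by simp
  qed
  moreover have "(\<Sum>k<j. v $ k * C k l) = \<mu> * v $ l" if l: "l < j" for l
  proof -
    have "(Cm *\<^sub>v v) $ l = \<mu> * v $ l" using v(3) v(1) l by simp
    moreover have "(Cm *\<^sub>v v) $ l = (\<Sum>k<j. v $ k * C k l)"
      using l v(1) unfolding Cm_def by (auto simp: scalar_prod_def atLeast0LessThan mult.commute intro!: sum.cong)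
    ultimately show ?thesis by simp
  qed
  ultimately show ?thesis by (intro exI[of _ \<mu>] exI[of _ "\<lambda>k. v $ k"]) auto
qed


lemma chain_zero:
  fixes A B :: "nat \<Rightarrow> nat \<Rightarrow> complex" and ys :: "nat \<Rightarrow> nat \<Rightarrow> complex"
  assumes H: "\<And>\<mu> w. (\<forall>l<n. (\<Sum>i<m. w i * (A i l + \<mu> * B i l)) = 0) \<Longrightarrow> \<forall>i<m. w i = 0"
    and ch: "\<And>k l. k < m \<Longrightarrow> l < n \<Longrightarrow> (\<Sum>i<m. ys k i * A i l) + (\<Sum>i<m. ys (Suc k) i * B i l) = 0"
  shows "\<forall>i<m. ys 0 i = 0"
proof (rule ccontr)
  assume nz: "\<not> (\<forall>i<m. ys 0 i = 0)"
  define D where "D j \<longleftrightarrow> (\<exists>c. (\<exists>k\<le>j. c k \<noteq> 0) \<and> (\<forall>i<m. (\<Sum>k\<le>j. c k * ys k i) = 0))" for j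
  have Dm: "D m" unfolding D_def by (rule dep_exists)
  define j where "j = (LEAST j. D j)"
  have Dj: "D j" unfolding j_def by (rule LeastI[of D, OF Dm])
  have jm: "j \<le> m" unfolding j_def by (rule Least_le[of D, OF Dm])
  have notD: "\<not> D j'" if "j' < j" for j' using not_less_Least[of j' D] that unfolding j_def by auto
  have j0: "j \<noteq> 0"
  proof
    assume "j = 0"
    with Dj obtain c :: "nat \<Rightarrow> complex" where c: "c 0 \<noteq> 0" "\<forall>i<m. c 0 * ys 0 i = 0" unfolding D_def by auto
    then show False using nz by auto
  qed
  obtain c where c: "\<exists>k\<le>j. c k \<noteq> 0" "\<forall>i<m. (\<Sum>k\<le>j. c k * ys k i) = 0"
    using Dj unfolding D_def by auto
  have split: "(\<Sum>k\<le>j. f k) = (\<Sum>k<j. f k) + f j" for f :: "nat \<Rightarrow> complex"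
    by (simp add: lessThan_Suc_atMost[symmetric])
  have atm: "{..j - 1} = {..<j}" using j0 by auto
  have indep: "\<forall>k<j. c' k = 0" if h: "\<forall>i<m. (\<Sum>k<j. c' k * ys k i) = 0" for c' :: "nat \<Rightarrow> complex"
  proof (rule ccontr)
    assume "\<not> (\<forall>k<j. c' k = 0)"
    then obtain k0 where k0: "k0 < j" "c' k0 \<noteq> 0" by auto
    have "D (j - 1)" unfolding D_def atm using h k0 by (intro exI[of _ c'] conjI exI[of _ k0]) auto
    then show False using notD[of "j - 1"] j0 by auto
  qed
  have cj: "c j \<noteq> 0"
  proof
    assume cj0: "c j = 0"
    have "\<forall>i<m. (\<Sum>k<j. c k * ys k i) = 0" using c(2) cj0 split by simp
    then have "\<forall>k<j. c k = 0" by (rule indep)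
    then show False using c(1) cj0 by (metis le_neq_implies_less)
  qed
  define d where "d k = - c k / c j" for k
  have ysj: "ys j i = (\<Sum>k<j. d k * ys k i)" if i: "i < m" for i
  proof -
    have "(\<Sum>k<j. c k * ys k i) + c j * ys j i = 0" using c(2) i split by simp
    then have "ys j i = - (\<Sum>k<j. c k * ys k i) / c j" using cj by (simp add: field_simps add_eq_0_iff)
    also have "\<dots> = (\<Sum>k<j. d k * ys k i)" unfolding d_def
      by (simp add: sum_divide_distrib sum_negf)
    finally show ?thesis .
  qed
  define Cf where "Cf k k' = (if Suc k < j then (if k' = Suc k then 1 else 0) else d k')" for k k'
  have shift: "ys (Suc k) i = (\<Sum>k'<j. Cf k k' * ys k' i)" if k: "k < j" and i: "i < m" for k i
  proof (cases "Suc k < j")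
    case True
    then have "(\<Sum>k'<j. Cf k k' * ys k' i) = (\<Sum>k'<j. if k' = Suc k then ys k' i else 0)"
      unfolding Cf_def by (intro sum.cong) auto
    also have "\<dots> = ys (Suc k) i" using True by simp
    finally show ?thesis by simp
  next
    case False
    then have "Suc k = j" using k by auto
    then show ?thesis unfolding Cf_def using ysj[OF i] False by simp
  qed
  obtain \<mu> v where v: "\<exists>k<j. v k \<noteq> 0" "\<forall>l<j. (\<Sum>k<j. v k * Cf k l) = \<mu> * v l"
    using eig_exists[of j Cf] j0 by auto
  define w where "w i = (\<Sum>k<j. v k * ys k i)" for i
  have "\<forall>i<m. w i = 0"
  proof (rule H[where \<mu>=\<mu>], intro allI impI)
    fix l assume l: "l < n"
    define T where "T k' = (\<Sum>i<m. ys k' i * B i l)" for k'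
    have wB: "(\<Sum>i<m. w i * B i l) = (\<Sum>k<j. v k * T k)"
      unfolding w_def T_def by (rule sum_swap_lin)
    have "(\<Sum>i<m. w i * A i l) = (\<Sum>k<j. v k * (\<Sum>i<m. ys k i * A i l))"
      unfolding w_def by (rule sum_swap_lin)
    also have "\<dots> = (\<Sum>k<j. v k * (- T (Suc k)))"
    proof (intro sum.cong refl)
      fix k assume "k \<in> {..<j}"
      then have "k < m" using jm by auto
      from ch[OF this l] show "v k * (\<Sum>i<m. ys k i * A i l) = v k * (- T (Suc k))"
        unfolding T_def by (simp add: eq_neg_iff_add_eq_0 flip: distrib_left)
    qed
    also have "\<dots> = - (\<Sum>k<j. v k * (\<Sum>k'<j. Cf k k' * T k'))"
    proof -
      have "T (Suc k) = (\<Sum>k'<j. Cf k k' * T k')" if k: "k < j" for k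
      proof -
        have "T (Suc k) = (\<Sum>i<m. (\<Sum>k'<j. Cf k k' * ys k' i) * B i l)"
          unfolding T_def using shift[OF k] by (intro sum.cong) auto
        also have "\<dots> = (\<Sum>k'<j. Cf k k' * T k')" unfolding T_def by (rule sum_swap_lin)
        finally show ?thesis .
      qed
      then show ?thesis by (simp add: sum_negf)
    qed
    also have "(\<Sum>k<j. v k * (\<Sum>k'<j. Cf k k' * T k')) = (\<Sum>k'<j. (\<Sum>k<j. v k * Cf k k') * T k')"
      by (simp add: sum_distrib_left sum_distrib_right mult.assoc) (rule sum.swap)
    also have "\<dots> = (\<Sum>k'<j. \<mu> * (v k' * T k'))" using v(2) by (intro sum.cong) (auto simp: mult.assoc)
    also have "\<dots> = \<mu> * (\<Sum>i<m. w i * B i l)" unfolding wB by (simp add: sum_distrib_left)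
    finally have wA: "(\<Sum>i<m. w i * A i l) = - (\<mu> * (\<Sum>i<m. w i * B i l))" .
    have "(\<Sum>i<m. w i * (A i l + \<mu> * B i l)) = (\<Sum>i<m. w i * A i l) + \<mu> * (\<Sum>i<m. w i * B i l)"
      by (simp add: algebra_simps sum.distrib sum_distrib_left)
    then show "(\<Sum>i<m. w i * (A i l + \<mu> * B i l)) = 0" using wA by simp
  qed
  then have "\<forall>k<j. v k = 0" using indep[of v] unfolding w_def by auto
  then show False using v(1) by auto
qed



lemma sum_seg: fixes f :: "nat \<Rightarrow> 'a::comm_monoid_add" and a b :: nat shows "sum f {a..<a+b} = (\<Sum>i<b. f (a+i))"
  by (induct b) auto

lemma sum_blocks: fixes f :: "nat \<Rightarrow> 'a::comm_monoid_add" shows "(\<Sum>e<K*m. f e) = (\<Sum>k<K. \<Sum>i<m. f (k*m+i))"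
  using sum.nat_group[where g=f and k=m and n=K, symmetric] by (simp add: sum_seg)

lemma idx_bound: "k < m \<Longrightarrow> l < (n::nat) \<Longrightarrow> k*n+l < m*n"
proof -
  assume "k < m" "l < n"
  then have "k*n + l < k*n + n" by simp
  also have "\<dots> = Suc k * n" by simp
  also have "\<dots> \<le> m * n" using \<open>k < m\<close> by (intro mult_le_mono1) simp
  finally show ?thesis .
qed

lemma idx_div: "l < (n::nat) \<Longrightarrow> (k*n+l) div n = k" by simp
lemma idx_mod: "l < (n::nat) \<Longrightarrow> (k*n+l) mod n = l" by simp

lemma poly_deg1: "degree p \<le> 1 \<Longrightarrow> poly p x = coeff p 0 + x * coeff p 1"
proof -
  assume d: "degree p \<le> 1"
  have "p = pCons (coeff p 0) (pCons (coeff p 1) 0)"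
    by (rule poly_eqI) (use d in \<open>auto simp: coeff_pCons coeff_eq_0 split: nat.split\<close>)
  then have "poly p x = poly (pCons (coeff p 0) (pCons (coeff p 1) 0)) x" by simp
  then show ?thesis by simp
qed

lemma coeff_mult_deg1: "degree p \<le> 1 \<Longrightarrow>
  coeff (p * q) t = coeff p 0 * coeff q t + (if t = 0 then 0 else coeff p 1 * coeff q (t - 1))"
proof -
  assume d: "degree p \<le> 1"
  have "p = pCons (coeff p 0) (pCons (coeff p 1) 0)"
    by (rule poly_eqI) (use d in \<open>auto simp: coeff_pCons coeff_eq_0 split: nat.split\<close>)
  then have "coeff (p * q) t = coeff (pCons (coeff p 0) (pCons (coeff p 1) 0) * q) t" by simp
  also have "\<dots> = coeff p 0 * coeff q t + (if t = 0 then 0 else coeff p 1 * coeff q (t - 1))"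
    by (simp add: coeff_pCons split: nat.split)
  finally show ?thesis .
qed

lemma poly_hom: "semiring_hom (\<lambda>p. poly p x)"
  by unfold_locales auto

lemma fract_hom: "semiring_hom (\<lambda>p. Fract p 1)"
  by unfold_locales (auto simp: add_fract mult_fract fract_collapse)

lemma rinv_triv:
  fixes E :: "'a::comm_ring_1 mat"
  assumes E: "E \<in> carrier_mat m n" and F: "F \<in> carrier_mat n m" and EF: "E * F = 1\<^sub>m m"
    and y: "y \<in> carrier_vec m" and ker: "transpose_mat E *\<^sub>v y = 0\<^sub>v n"
  shows "y = 0\<^sub>v m"
proof -
  have "y = transpose_mat (E * F) *\<^sub>v y" using EF y by simp
  also have "\<dots> = (transpose_mat F * transpose_mat E) *\<^sub>v y" using E F by (simp add: transpose_mult)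
  also have "\<dots> = transpose_mat F *\<^sub>v (transpose_mat E *\<^sub>v y)" using E F y
    by (simp add: assoc_mult_mat_vec[of _ m n _ m])
  also have "\<dots> = 0\<^sub>v m" using ker F by (intro eq_vecI) (auto simp: scalar_prod_def)
  finally show ?thesis .
qed

lemma coeff_monom_sum: "coeff (\<Sum>k<m. monom (c k) k) t = (if t < m then c t else 0)"
  by (simp add: coeff_sum)


theorem lemma5p2:
  fixes L :: "complex poly mat"
  assumes "is_pencil L"
  shows "(right_invertible L \<longleftrightarrow>
            (\<not> (\<exists>x. finite_eigenvalue L x)) \<and> no_left_minimal_indices L)
       \<and> (right_invertible L \<longrightarrow>
            (\<exists>R. is_right_inverse L R \<and> pmat_degree_le R (int (dim_row L) - 1)))"
proof -
  define m where "m = dim_row L"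
  define n where "n = dim_col L"
  have LC: "L \<in> carrier_mat m n" unfolding m_def n_def by auto
  have evC: "eval_pmat L x \<in> carrier_mat m n" for x unfolding eval_pmat_def using LC by auto
  have frC: "frac_mat L \<in> carrier_mat m n" unfolding frac_mat_def using LC by auto
  have nr_le: "normal_rank L \<le> m"
    using vec_space.rank_le[OF frC] unfolding normal_rank_def m_def by simp
  have fwd: "(\<not> (\<exists>x. finite_eigenvalue L x)) \<and> no_left_minimal_indices L" if ri: "right_invertible L"
  proof -
    obtain R where RC: "R \<in> carrier_mat n m" and LR: "L * R = 1\<^sub>m m"
      using ri unfolding right_invertible_def is_right_inverse_def m_def n_def by auto
    have "\<not> finite_eigenvalue L x" for x
    proof -
      have "eval_pmat L x * eval_pmat R x = 1\<^sub>m m"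
        unfolding eval_pmat_def using semiring_hom.mat_hom_mult[OF poly_hom LC RC, symmetric] LR semiring_hom.mat_hom_one[OF poly_hom] by simp
      moreover have "eval_pmat R x \<in> carrier_mat n m" unfolding eval_pmat_def using RC by auto
      ultimately have "vec_space.rank m (eval_pmat L x) = m"
        using vec_space.rank_full_if[OF evC] rinv_triv[OF evC] by blast
      then show ?thesis unfolding finite_eigenvalue_def m_def using nr_le m_def by simp
    qed
    moreover have "no_left_minimal_indices L"
    proof -
      have FR: "frac_mat L * frac_mat R = 1\<^sub>m m"
        unfolding frac_mat_def using semiring_hom.mat_hom_mult[OF fract_hom LC RC, symmetric] LR semiring_hom.mat_hom_one[OF fract_hom] by simp
      have FRC: "frac_mat R \<in> carrier_mat n m" unfolding frac_mat_def using RC by auto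
      show ?thesis unfolding no_left_minimal_indices_def left_null_space_def
        using rinv_triv[OF frC FRC FR] frC m_def n_def by auto
    qed
    ultimately show ?thesis by auto
  qed
  have bwd: "\<exists>R. is_right_inverse L R \<and> pmat_degree_le R (int m - 1)"
    if noev: "\<not> (\<exists>x. finite_eigenvalue L x)" and nolmi: "no_left_minimal_indices L"
  proof -
    have nr: "normal_rank L = m"
    proof -
      have "vec_space.rank m (frac_mat L) = m"
      proof (rule vec_space.rank_full_if[OF frC])
        fix y assume "y \<in> carrier_vec m" "transpose_mat (frac_mat L) *\<^sub>v y = 0\<^sub>v n"
        then have "y \<in> left_null_space L" unfolding left_null_space_def m_def n_def by auto
        then show "y = 0\<^sub>v m" using nolmi unfolding no_left_minimal_indices_def m_def by auto
      qed
      then show ?thesis unfolding normal_rank_def m_def by simp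
    qed
    have evfull: "y = 0\<^sub>v m" if y: "y \<in> carrier_vec m" and ker: "transpose_mat (eval_pmat L x) *\<^sub>v y = 0\<^sub>v n" for x y
    proof -
      have "\<not> vec_space.rank m (eval_pmat L x) < m"
        using noev nr unfolding finite_eigenvalue_def m_def by auto
      then have "vec_space.rank m (eval_pmat L x) = m" using vec_space.rank_le[OF evC, of x] by simp
      then show ?thesis using vec_space.rank_full_imp[OF evC _ y ker] by simp
    qed
    define A where "A i l = coeff (L $$ (i,l)) 0" for i l
    define B where "B i l = coeff (L $$ (i,l)) 1" for i l
    have deg: "degree (L $$ (i,l)) \<le> 1" if "i < m" "l < n" for i l
      using assms that unfolding is_pencil_def m_def n_def by auto
    have H: "\<forall>i<m. w i = 0" if hw: "\<forall>l<n. (\<Sum>i<m. w i * (A i l + \<mu> * B i l)) = 0" for \<mu> w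
    proof -
      define y where "y = vec m w"
      have yC: "y \<in> carrier_vec m" unfolding y_def by auto
      have "transpose_mat (eval_pmat L \<mu>) *\<^sub>v y = 0\<^sub>v n"
      proof (rule eq_vecI)
        fix l assume "l < dim_vec (0\<^sub>v n :: complex vec)"
        then have l: "l < n" by simp
        have "(transpose_mat (eval_pmat L \<mu>) *\<^sub>v y) $ l = (\<Sum>i<m. eval_pmat L \<mu> $$ (i, l) * w i)"
          using l evC[of \<mu>] unfolding y_def by (auto simp: scalar_prod_def atLeast0LessThan intro!: sum.cong)
        also have "\<dots> = (\<Sum>i<m. w i * (A i l + \<mu> * B i l))"
          unfolding eval_pmat_def A_def B_def using LC l deg
          by (intro sum.cong) (auto simp: poly_deg1 mult.commute)
        also have "\<dots> = 0" using hw l by auto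
        finally show "(transpose_mat (eval_pmat L \<mu>) *\<^sub>v y) $ l = 0\<^sub>v n $ l" using l by simp
      qed (use evC in auto)
      then have "y = 0\<^sub>v m" using evfull[OF yC] by auto
      then show ?thesis unfolding y_def by (auto simp: vec_eq_iff)
    qed
    define M where "M = mat (Suc m * m) (m * n) (\<lambda>(e,u).
        (if u div n = e div m then A (e mod m) (u mod n) else 0)
      + (if Suc (u div n) = e div m then B (e mod m) (u mod n) else 0))"
    define Bm where "Bm = mat (Suc m * m) m (\<lambda>(e,j). if e = j then 1 else (0::complex))"
    have MC: "M \<in> carrier_mat (Suc m * m) (m * n)" unfolding M_def by auto
    have BmC: "Bm \<in> carrier_mat (Suc m * m) m" unfolding Bm_def by auto
    have Ment: "M $$ (k'' * m + i, k * n + l) =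
        (if k = k'' then A i l else 0) + (if Suc k = k'' then B i l else 0)"
      if "k'' < Suc m" "i < m" "k < m" "l < n" for k'' i k l
      unfolding M_def using that idx_bound[of k'' "Suc m" i m] idx_bound[of k m l n]
      by (simp add: idx_div idx_mod)
    obtain X where XC: "X \<in> carrier_mat (m * n) m" and MX: "M * X = Bm"
    proof -
      have "\<exists>X \<in> carrier_mat (m * n) m. M * X = Bm"
      proof (rule fredholm[OF MC BmC])
        fix y assume yC: "y \<in> carrier_vec (Suc m * m)" and ker: "transpose_mat M *\<^sub>v y = 0\<^sub>v (m * n)"
        define ys where "ys k i = y $ (k * m + i)" for k i
        have ch: "(\<Sum>i<m. ys k i * A i l) + (\<Sum>i<m. ys (Suc k) i * B i l) = 0"
          if k: "k < m" and l: "l < n" for k l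
        proof -
          have kl: "k * n + l < m * n" using idx_bound[OF k l] .
          have "(transpose_mat M *\<^sub>v y) $ (k * n + l) = (\<Sum>e<Suc m * m. M $$ (e, k * n + l) * y $ e)"
            using kl MC yC by (auto simp: scalar_prod_def atLeast0LessThan intro!: sum.cong)
          also have "\<dots> = (\<Sum>k''<Suc m. \<Sum>i<m. M $$ (k'' * m + i, k * n + l) * y $ (k'' * m + i))"
            by (rule sum_blocks)
          also have "\<dots> = (\<Sum>k''<Suc m. (if k = k'' then (\<Sum>i<m. ys k i * A i l) else 0)
                + (if Suc k = k'' then (\<Sum>i<m. ys (Suc k) i * B i l) else 0))"
            using k l by (intro sum.cong refl) (auto simp: Ment ys_def sum.distrib mult.commute distrib_left)
          also have "\<dots> = (\<Sum>i<m. ys k i * A i l) + (\<Sum>i<m. ys (Suc k) i * B i l)"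
            using k by (simp add: sum.distrib)
          finally show ?thesis using ker kl by simp
        qed
        have "\<forall>i<m. ys 0 i = 0" by (rule chain_zero[where A=A and B=B and m=m and n=n and ys=ys, OF H ch]) auto
        then have y0: "y $ i = 0" if "i < m" for i using that unfolding ys_def by auto
        show "transpose_mat Bm *\<^sub>v y = 0\<^sub>v m"
        proof (rule eq_vecI)
          fix j assume "j < dim_vec (0\<^sub>v m :: complex vec)"
          then have j: "j < m" by simp
          have jb: "j < Suc m * m" using j by simp
          have "(transpose_mat Bm *\<^sub>v y) $ j = (\<Sum>e<Suc m * m. (if e = j then 1 else 0) * y $ e)"
            using j jb BmC yC unfolding Bm_def by (auto simp: scalar_prod_def atLeast0LessThan intro!: sum.cong)
          also have "\<dots> = (\<Sum>e<Suc m * m. (if e = j then y $ e else 0))"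
            by (intro sum.cong) auto
          also have "\<dots> = y $ j" using jb by (simp only: sum.delta finite_lessThan) simp
          finally show "(transpose_mat Bm *\<^sub>v y) $ j = 0\<^sub>v m $ j" using y0[OF j] j by simp
        qed (use BmC in auto)
      qed
      then show ?thesis using that by blast
    qed
    define R where "R = mat n m (\<lambda>(l,j). \<Sum>k<m. monom (X $$ (k * n + l, j)) k)"
    have RC: "R \<in> carrier_mat n m" unfolding R_def by auto
    have cR: "coeff (R $$ (l, j)) t = (if t < m then X $$ (t * n + l, j) else 0)" if "l < n" "j < m" for l j t
      unfolding R_def using that by (simp add: coeff_monom_sum)
    have LR: "L * R = 1\<^sub>m m"
    proof (rule eq_matI)
      fix i j assume "i < dim_row (1\<^sub>m m :: complex poly mat)" "j < dim_col (1\<^sub>m m :: complex poly mat)"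
      then have i: "i < m" and j: "j < m" by auto
      define G where "G t = (\<Sum>l<n. A i l * (if t < m then X $$ (t * n + l, j) else 0))
         + (if t = 0 then 0 else (\<Sum>l<n. B i l * (if t - 1 < m then X $$ ((t - 1) * n + l, j) else 0)))" for t
      have "(L * R) $$ (i, j) = (\<Sum>l<n. L $$ (i, l) * R $$ (l, j))"
        using LC RC i j by (auto simp: scalar_prod_def atLeast0LessThan intro!: sum.cong)
      moreover have "coeff (\<Sum>l<n. L $$ (i, l) * R $$ (l, j)) t = G t" for t
      proof -
        have "coeff (\<Sum>l<n. L $$ (i, l) * R $$ (l, j)) t = (\<Sum>l<n. coeff (L $$ (i, l) * R $$ (l, j)) t)"
          by (simp add: coeff_sum)
        also have "\<dots> = (\<Sum>l<n. A i l * coeff (R $$ (l, j)) t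
            + (if t = 0 then 0 else B i l * coeff (R $$ (l, j)) (t - 1)))"
          unfolding A_def B_def using deg[OF i] by (intro sum.cong refl) (simp add: coeff_mult_deg1)
        also have "\<dots> = G t" unfolding G_def using j
          by (cases t) (simp_all add: cR sum.distrib cong: if_cong)
        finally show ?thesis .
      qed
      moreover have "G t = coeff (1\<^sub>m m $$ (i, j)) t" for t
      proof (cases "t \<le> m")
        case True
        have tb: "t * m + i < Suc m * m" using idx_bound[of t "Suc m" i m] True i by simp
        have "(M * X) $$ (t * m + i, j) = (\<Sum>u<m * n. M $$ (t * m + i, u) * X $$ (u, j))"
          using MC XC tb j by (auto simp: scalar_prod_def atLeast0LessThan intro!: sum.cong)
        also have "\<dots> = (\<Sum>k<m. \<Sum>l<n. M $$ (t * m + i, k * n + l) * X $$ (k * n + l, j))"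
          by (rule sum_blocks)
        also have "\<dots> = (\<Sum>k<m. (if k = t then (\<Sum>l<n. A i l * X $$ (k * n + l, j)) else 0)
              + (if Suc k = t then (\<Sum>l<n. B i l * X $$ (k * n + l, j)) else 0))"
          using True i by (intro sum.cong refl) (auto simp: Ment sum.distrib distrib_right)
        also have "\<dots> = G t" unfolding G_def using True
          by (cases t) (auto simp: sum.distrib cong: if_cong)
        finally have "G t = (M * X) $$ (t * m + i, j)" by simp
        also have "\<dots> = Bm $$ (t * m + i, j)" using MX by simp
        also have "\<dots> = (if t = 0 \<and> i = j then 1 else 0)" unfolding Bm_def using tb j i
          by (cases t) auto
        also have "\<dots> = coeff (1\<^sub>m m $$ (i, j)) t" using i j by (cases t) auto
        finally show ?thesis .
      next
        case False
        then show ?thesis unfolding G_def using i j by auto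
      qed
      ultimately show "(L * R) $$ (i, j) = 1\<^sub>m m $$ (i, j)" by (auto intro: poly_eqI)
    qed (use LC RC in auto)
    have "pmat_degree_le R (int m - 1)"
      unfolding pmat_degree_le_def
    proof (intro allI impI)
      fix l j assume l: "l < dim_row R" and j: "j < dim_col R"
      then have l': "l < n" and j': "j < m" using RC by auto
      have "degree (R $$ (l, j)) \<le> m - 1"
      proof (rule degree_le)
        show "\<forall>t>m - 1. coeff (R $$ (l, j)) t = 0" using cR[OF l' j'] by auto
      qed
      then show "int (degree (R $$ (l, j))) \<le> int m - 1" using j' by linarith
    qed
    moreover have "is_right_inverse L R" unfolding is_right_inverse_def
      using RC LR m_def n_def by auto
    ultimately show ?thesis by auto
  qed
  show ?thesis using fwd bwd unfolding right_invertible_def m_def by blast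
qed

end
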